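(* Let $g(x)\in\mathbb{Z}[x]$ be irreducible in $\mathbb{Z}[x]$. If there is an odd integer $k$ with $g(k^2)\equiv 2\pmod 4$, then $g(x^2)$ is irreducible in $\mathbb{Z}[x]$.
   Context: Irreducibility is in the ring $\mathbb{Z}[x]$: a nonzero non-unit element is irreducible if it is not a product of two non-units. *)

theory Defs
  imports "HOL-Computational_Algebra.Polynomial_Factorial"
begin

end

theory Submission imports Defs begin

lemma X2: "[:0,0,1::int:] = [:0,1:] * [:0,1:]" by simp

lemma pCons_as: "pCons (a::int) p = [:a:] + [:0,1:] * p"
  by (simp add: pCons_eq_iff) 

lemma decomp:
  fixes p :: "int poly"
  shows "\<exists>e q. p = pcompose e [:0,0,1:] + [:0,1:] * pcompose q [:0,0,1:]"
proof (induction p)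
  case 0
  show ?case by (rule exI[of _ 0], rule exI[of _ 0]) simp
next
  case (pCons a p)
  then obtain e q where eo: "p = pcompose e [:0,0,1:] + [:0,1:] * pcompose q [:0,0,1:]" by blast
  have "pCons a p = pcompose (pCons a q) [:0,0,1:] + [:0,1:] * pcompose e [:0,0,1:]"
    apply (subst pCons_as)
    apply (subst eo)
    apply (simp only: pcompose_pCons X2)
    by (simp add: algebra_simps)
  then show ?case by blast
qed

lemma norm_ex:
  fixes A :: "int poly"
  shows "\<exists>N. pcompose N [:0,0,1:] = A * pcompose A [:0,-1:] \<and>
     (\<forall>k. even (poly A k - poly (pcompose A [:0,-1:]) k))"
proof -
  obtain e q where eq: "A = pcompose e [:0,0,1:] + [:0,1:] * pcompose q [:0,0,1:]"
    using decomp by blast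
  have sq: "pcompose [:0,0,1:] [:0,-1:] = [:0,0,1::int:]"
    by (simp add: pcompose_pCons)
  have A': "pcompose A [:0,-1:] = pcompose e [:0,0,1:] - [:0,1:] * pcompose q [:0,0,1:]"
    apply (subst eq)
    apply (simp only: pcompose_add pcompose_mult pcompose_assoc[symmetric] sq)
    by (simp add: pcompose_pCons)
  define N where "N = e * e - [:0,1:] * q * q"
  have "pcompose N [:0,0,1:] = A * pcompose A [:0,-1:]"
    unfolding N_def A'
    apply (subst eq)
    apply (simp only: pcompose_diff pcompose_mult)
    apply (simp add: pcompose_pCons algebra_simps)
    done
  moreover have "even (poly A k - poly (pcompose A [:0,-1:]) k)" for k
  proof -
    have "poly A k - poly (pcompose A [:0,-1:]) k = 2 * (k * poly q (k^2))"
      apply (subst A') apply (subst eq)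
      by (simp add: poly_pcompose power2_eq_square)
    then show ?thesis by simp
  qed
  ultimately show ?thesis by blast
qed

lemma parity:
  fixes a b u c :: int
  assumes "even (a - b)" "u dvd 1" "c * u = a * b" "c mod 4 = 2"
  shows False
proof -
  have u: "u = 1 \<or> u = -1" using assms(2) zdvd1_eq[of u] by arith
  have "even c" using assms(4) by presburger
  then have "even (a*b)" by (metis assms(3) dvd_mult2)
  then have "even a \<or> even b" by auto
  moreover have "even a = even b" using assms(1) by simp
  ultimately have "even a \<and> even b" by auto
  then obtain x y where "a = 2*x" "b = 2*y" by blast
  then have "4 dvd a * b" by simp
  then have "4 dvd c" using u assms(3) by (metis dvd_minus_iff mult.right_neutral mult_minus1_right)
  then show False using assms(4) by presburger
qed

lemma core:
  fixes g NA NB A A' B B' :: "int poly"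
  assumes g: "irreducible g" and "poly g (k^2) mod 4 = 2"
    and NA: "pcompose NA [:0,0,1:] = A * A'" and NB: "pcompose NB [:0,0,1:] = B * B'"
    and par: "\<forall>k. even (poly A k - poly A' k)"
    and gg: "g * g = NA * NB" and dv: "g dvd NA"
  shows "A dvd 1 \<or> B dvd 1"
proof -
  obtain c where c: "NA = g * c" using dv by blast
  have g0: "g \<noteq> 0" using g by auto
  have "g * g = g * (c * NB)" using gg c by (simp add: mult.assoc)
  then have "g = c * NB" using g0 by simp
  then have "c dvd 1 \<or> NB dvd 1" using g irreducibleD by blast
  then show ?thesis
  proof
    assume "NB dvd 1"
    then obtain u where "NB = [:u:]" using is_unit_poly_iff by blast
    then have "B * B' = [:u:]" using NB by simp
    moreover have "[:u:] dvd 1" using \<open>NB dvd 1\<close> \<open>NB = [:u:]\<close> by simp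
    ultimately have "B dvd 1" by (metis is_unit_mult_iff)
    then show ?thesis by simp
  next
    assume "c dvd 1"
    then obtain u where u: "c = [:u:]" "u dvd 1" using is_unit_poly_iff by blast
    have "poly NA (k^2) = poly (pcompose NA [:0,0,1:]) k"
      by (simp add: poly_pcompose power2_eq_square)
    then have "poly g (k^2) * u = poly A k * poly A' k" using NA c u by (simp add: mult.commute)
    then have False using parity[OF _ u(2) _ assms(2)] par by blast
    then show ?thesis ..
  qed
qed

theorem lemma3:
  fixes g :: "int poly" and k :: int
  assumes "irreducible g"
    and "odd k"
    and "poly g (k ^ 2) mod 4 = 2"
  shows "irreducible (pcompose g [:0, 0, 1:])"
proof -
  define G where "G = pcompose g [:0, 0, 1:]"
  have g0: "g \<noteq> 0" using assms(1) by auto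
  have sq: "pcompose [:0,0,1:] [:0,-1:] = [:0,0,1::int:]"
    by (simp add: pcompose_pCons)
  have G0: "G \<noteq> 0" unfolding G_def using pcompose_eq_0[of g "[:0,0,1:]"] g0 by auto
  have Gnu: "\<not> G dvd 1"
  proof
    assume "G dvd 1"
    then obtain c where "G = [:c:]" using is_unit_poly_iff by blast
    then have "degree g * 2 = 0" using degree_pcompose[of g "[:0,0,1:]"] unfolding G_def by simp
    then have "degree g = 0" by simp
    then have "g = [:coeff g 0:]" by (metis degree_0_id)
    then have "G = g" unfolding G_def by (metis pcompose_const)
    then show False using \<open>G dvd 1\<close> assms(1) by (auto dest: irreducible_not_unit)
  qed
  have GG: "pcompose G [:0,-1:] = G"
    unfolding G_def by (simp only: pcompose_assoc[symmetric] sq)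
  show ?thesis unfolding G_def[symmetric]
  proof (rule irreducibleI[OF G0 Gnu])
    fix A B assume AB: "G = A * B"
    obtain NA where NA: "pcompose NA [:0,0,1:] = A * pcompose A [:0,-1:]"
      and pA: "\<forall>k. even (poly A k - poly (pcompose A [:0,-1:]) k)" using norm_ex by blast
    obtain NB where NB: "pcompose NB [:0,0,1:] = B * pcompose B [:0,-1:]"
      and pB: "\<forall>k. even (poly B k - poly (pcompose B [:0,-1:]) k)" using norm_ex by blast
    have "pcompose (NA * NB) [:0,0,1:] = G * pcompose G [:0,-1:]"
      unfolding pcompose_mult NA NB AB by (simp add: pcompose_mult algebra_simps)
    also have "\<dots> = pcompose (g * g) [:0,0,1:]" unfolding GG by (simp add: G_def pcompose_mult)
    finally have "pcompose (NA * NB - g * g) [:0,0,1:] = 0" by (simp add: pcompose_diff)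
    then have gg: "g * g = NA * NB" using pcompose_eq_0[of "NA * NB - g * g" "[:0,0,1:]"] by simp
    have "prime_elem g" using assms(1) prime_elem_iff_irreducible by blast
    then have "g dvd NA \<or> g dvd NB" using gg prime_elem_dvd_mult_iff by (metis dvd_triv_left)
    then show "A dvd 1 \<or> B dvd 1"
    proof
      assume "g dvd NA" then show ?thesis using core[OF assms(1) assms(3) NA NB pA gg] by blast
    next
      assume "g dvd NB" then show ?thesis using core[OF assms(1) assms(3) NB NA pB _] gg
        by (metis mult.commute)
    qed
  qed
qed

end
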